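(* Let $\Sigma^*$ be an $n\times n$ positive definite matrix whose conditional independence structure is a tree $T^*$, let $D^*$ be a diagonal matrix with nonnegative entries, and let $\Sigma^o=\Sigma^*+D^*$. Let $\lambda_{\min}$ be a real number that is at most the smallest eigenvalue of $\Sigma^*$, and suppose $D^*_{bb}<\lambda_{\min}$ for every node $b$ of $T^*$ that is the neighbor of a leaf of $T^*$. Then for every decomposition $\Sigma^o=\Sigma'+D'$ in which $\Sigma'$ is positive definite with smallest eigenvalue at least $\lambda_{\min}$ and conditional independence structure a tree $T'$, and $D'$ is diagonal with nonnegative entries, we have $T'=T^*$.
   Context: For an $n\times n$ positive definite matrix $\Sigma$ with inverse $\Omega$, its conditional independence structure is the graph on $\{1,\dots,n\}$ with an edge $\{i,j\}$ ($i\neq j$) iff $\Omega_{ij}\neq 0$. *)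

theory Defs
  imports "HOL-Analysis.Analysis"
begin

definition pos_def :: "real^'n^'n \<Rightarrow> bool" where
  "pos_def A \<longleftrightarrow> transpose A = A \<and> (\<forall>x. x \<noteq> 0 \<longrightarrow> x \<bullet> (A *v x) > 0)"

definition is_eigenvalue :: "real^'n^'n \<Rightarrow> real \<Rightarrow> bool" where
  "is_eigenvalue A \<mu> \<longleftrightarrow> (\<exists>x. x \<noteq> 0 \<and> A *v x = \<mu> *\<^sub>R x)"

definition min_eig_ge :: "real^'n^'n \<Rightarrow> real \<Rightarrow> bool" where
  "min_eig_ge A l \<longleftrightarrow> (\<forall>\<mu>. is_eigenvalue A \<mu> \<longrightarrow> l \<le> \<mu>)"

definition diag_nonneg :: "real^'n^'n \<Rightarrow> bool" where
  "diag_nonneg D \<longleftrightarrow> (\<forall>i j. i \<noteq> j \<longrightarrow> D$i$j = 0) \<and> (\<forall>i. 0 \<le> D$i$i)"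

definition ci_graph :: "real^'n^'n \<Rightarrow> 'n \<Rightarrow> 'n \<Rightarrow> bool" where
  "ci_graph S i j \<longleftrightarrow> i \<noteq> j \<and> matrix_inv S $ i $ j \<noteq> 0"

text \<open>Simple graphs on the vertex set UNIV :: 'n set, given by a symmetric irreflexive
  adjacency relation E.\<close>
definition graph_connected :: "('n \<Rightarrow> 'n \<Rightarrow> bool) \<Rightarrow> bool" where
  "graph_connected E \<longleftrightarrow> (\<forall>u v. (u, v) \<in> {(a, b). E a b}\<^sup>*)"

definition is_cycle :: "('n \<Rightarrow> 'n \<Rightarrow> bool) \<Rightarrow> 'n list \<Rightarrow> bool" where
  "is_cycle E vs \<longleftrightarrow> length vs \<ge> 3 \<and> distinct vs
     \<and> (\<forall>k. Suc k < length vs \<longrightarrow> E (vs ! k) (vs ! Suc k))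
     \<and> E (last vs) (hd vs)"

definition is_tree :: "('n \<Rightarrow> 'n \<Rightarrow> bool) \<Rightarrow> bool" where
  "is_tree E \<longleftrightarrow> (\<forall>u v. E u v \<longrightarrow> E v u) \<and> (\<forall>u. \<not> E u u)
     \<and> graph_connected E \<and> (\<nexists>vs. is_cycle E vs)"

definition is_leaf :: "('n \<Rightarrow> 'n \<Rightarrow> bool) \<Rightarrow> 'n \<Rightarrow> bool" where
  "is_leaf E v \<longleftrightarrow> card {u. E v u} = 1"

end

theory Submission
  imports Defs
begin


definition Rv :: "('n \<Rightarrow> 'n \<Rightarrow> bool) \<Rightarrow> 'n \<Rightarrow> ('n \<times> 'n) set" where
  "Rv E k = {(a,b). E a b \<and> a \<noteq> k \<and> b \<noteq> k}"

lemma first_hit: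
  assumes "(x,k) \<in> G\<^sup>*" "x \<noteq> k"
  shows "\<exists>p. (p,k) \<in> G \<and> (x,p) \<in> {(a,b). (a,b) \<in> G \<and> a \<noteq> k \<and> b \<noteq> k}\<^sup>*"
  using assms
proof (induction rule: converse_rtrancl_induct)
  case base
  then show ?case by simp
next
  case (step y z)
  show ?case
  proof (cases "z = k")
    case True
    then show ?thesis using step by auto
  next
    case False
    then obtain p where p: "(p,k) \<in> G" "(z,p) \<in> {(a,b). (a,b) \<in> G \<and> a \<noteq> k \<and> b \<noteq> k}\<^sup>*"
      using step by auto
    have "(y,z) \<in> {(a,b). (a,b) \<in> G \<and> a \<noteq> k \<and> b \<noteq> k}" using step False by auto
    then show ?thesis using p(1) converse_rtrancl_into_rtrancl[OF _ p(2)] by blast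
  qed
qed

lemma Rv_sym:
  assumes "\<forall>u v. E u v \<longrightarrow> E v u" "(a,b) \<in> (Rv E k)\<^sup>*"
  shows "(b,a) \<in> (Rv E k)\<^sup>*"
proof -
  have "(Rv E k)\<inverse> = Rv E k" using assms(1) unfolding Rv_def by auto
  then show ?thesis using rtrancl_converseI[OF assms(2)] by simp
qed

lemma simple_path:
  assumes "(a,b) \<in> G\<^sup>*"
  shows "\<exists>xs. xs \<noteq> [] \<and> hd xs = a \<and> last xs = b \<and> distinct xs \<and> successively (\<lambda>x y. (x,y) \<in> G) xs"
  using assms
proof (induction rule: rtrancl_induct)
  case base
  then show ?case by (intro exI[of _ "[a]"]) auto
next
  case (step b c)
  then obtain xs where xs: "xs \<noteq> []" "hd xs = a" "last xs = b" "distinct xs"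
      "successively (\<lambda>x y. (x,y) \<in> G) xs" by auto
  show ?case
  proof (cases "c \<in> set xs")
    case True
    then obtain ys zs where yz: "xs = ys @ c # zs" by (meson split_list)
    have "successively (\<lambda>x y. (x,y) \<in> G) (ys @ [c])"
      using xs(5) unfolding yz by (auto simp: successively_append_iff)
    moreover have "hd (ys @ [c]) = a" using xs(2) yz by (cases ys) auto
    ultimately show ?thesis using xs(4) yz by (intro exI[of _ "ys @ [c]"]) auto
  next
    case False
    have "successively (\<lambda>x y. (x,y) \<in> G) (xs @ [c])"
      using xs step(2) by (auto simp: successively_append_iff)
    then show ?thesis using xs False by (intro exI[of _ "xs @ [c]"]) auto
  qed
qed

lemma avoid_all:
  "successively (\<lambda>x y. (x,y) \<in> Rv E j) xs \<Longrightarrow> xs \<noteq> [] \<Longrightarrow> hd xs \<noteq> j \<Longrightarrow> j \<notin> set xs"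
proof (induction xs)
  case Nil
  then show ?case by simp
next
  case (Cons x xs)
  then show ?case
    by (cases xs) (auto simp: Rv_def)
qed

lemma treeU:
  assumes T: "is_tree E" and "E j p" "E j q" "p \<noteq> q"
  shows "(p,q) \<notin> (Rv E j)\<^sup>*"
proof
  assume "(p,q) \<in> (Rv E j)\<^sup>*"
  then obtain xs where xs: "xs \<noteq> []" "hd xs = p" "last xs = q" "distinct xs"
      "successively (\<lambda>x y. (x,y) \<in> Rv E j) xs" using simple_path by metis
  have irr: "\<And>u. \<not> E u u" and sym: "\<And>u v. E u v \<Longrightarrow> E v u" using T unfolding is_tree_def by auto
  have pj: "p \<noteq> j" using assms(2) irr by auto
  have jn: "j \<notin> set xs" using avoid_all[OF xs(5) xs(1)] xs(2) pj by auto
  have len: "length xs \<ge> 2"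
  proof (rule ccontr)
    assume "\<not> ?thesis"
    moreover have "length xs \<noteq> 0" using xs(1) by simp
    ultimately have "length xs = 1" by linarith
    then obtain y where "xs = [y]" by (metis One_nat_def length_0_conv length_Suc_conv)
    then show False using xs assms(4) by auto
  qed
  have "is_cycle E (j # xs)"
    unfolding is_cycle_def
  proof (intro conjI allI impI)
    show "3 \<le> length (j # xs)" using len by simp
    show "distinct (j # xs)" using jn xs(4) by simp
    show "E (last (j # xs)) (hd (j # xs))" using xs(1,3) sym[OF assms(3)] by simp
  next
    fix k assume k: "Suc k < length (j # xs)"
    show "E ((j # xs) ! k) ((j # xs) ! Suc k)"
    proof (cases k)
      case 0
      then show ?thesis using xs(1,2) assms(2) by (simp add: hd_conv_nth)
    next
      case (Suc m)
      then have "(xs ! m, xs ! Suc m) \<in> Rv E j" using successively_nth[OF xs(5)] k by simp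
      then show ?thesis using Suc by (simp add: Rv_def)
    qed
  qed
  then show False using T unfolding is_tree_def by blast
qed

lemma Rv_sub_G: "{(a,b). (a,b) \<in> Rv E u \<and> a \<noteq> k \<and> b \<noteq> k} \<subseteq> Rv E k"
  unfolding Rv_def by auto

lemma T2:
  assumes T: "is_tree E" and e: "E u v" and k: "k \<noteq> u" "k \<noteq> v"
  shows "(u,k) \<notin> (Rv E v)\<^sup>* \<or> (v,k) \<notin> (Rv E u)\<^sup>*"
proof (rule ccontr)
  assume "\<not> ?thesis"
  then have a: "(u,k) \<in> (Rv E v)\<^sup>*" and b: "(v,k) \<in> (Rv E u)\<^sup>*" by auto
  have sym: "\<forall>u v. E u v \<longrightarrow> E v u" using T unfolding is_tree_def by auto
  have b': "(k,v) \<in> (Rv E u)\<^sup>*" using Rv_sym[OF sym b] .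
  obtain w where w: "(w,v) \<in> Rv E u" "(k,w) \<in> {(a,b). (a,b) \<in> Rv E u \<and> a \<noteq> v \<and> b \<noteq> v}\<^sup>*"
    using first_hit[OF b'] k by auto
  have "(k,w) \<in> (Rv E v)\<^sup>*" using subsetD[OF rtrancl_mono[OF Rv_sub_G] w(2)] .
  then have uw: "(u,w) \<in> (Rv E v)\<^sup>*" using rtrancl_trans[OF a] by blast
  have "E v w" "w \<noteq> u" using w(1) sym unfolding Rv_def by auto
  moreover have "E v u" using e sym by auto
  ultimately show False using treeU[OF T, of v u w] uw by auto
qed

lemma conn: "is_tree E \<Longrightarrow> (u,v) \<in> {(a,b). E a b}\<^sup>*"
  unfolding is_tree_def graph_connected_def by auto

lemma Eg_Rv: "{(a,b). (a,b) \<in> {(a,b). E a b} \<and> a \<noteq> k \<and> b \<noteq> k} = Rv E k"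
  unfolding Rv_def by auto

lemma first_hit_E:
  assumes "is_tree E" "x \<noteq> k"
  shows "\<exists>p. E p k \<and> (x,p) \<in> (Rv E k)\<^sup>*"
  using first_hit[OF conn[OF assms(1)] assms(2)] unfolding Eg_Rv by auto

lemma T1:
  assumes T: "is_tree E" and uv: "u \<noteq> v" "\<not> E u v"
  shows "\<exists>k. k \<noteq> u \<and> k \<noteq> v \<and> (u,v) \<notin> (Rv E k)\<^sup>*"
proof -
  have sym: "\<forall>u v. E u v \<longrightarrow> E v u" using T unfolding is_tree_def by auto
  obtain p where p: "E p v" "(u,p) \<in> (Rv E v)\<^sup>*" using first_hit_E[OF T uv(1)] by auto
  have pu: "p \<noteq> u" using p uv by auto
  have pv: "p \<noteq> v" using p T unfolding is_tree_def by auto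
  have "(u,v) \<notin> (Rv E p)\<^sup>*"
  proof
    assume h: "(u,v) \<in> (Rv E p)\<^sup>*"
    obtain w where w: "(w,v) \<in> Rv E p" "(u,w) \<in> {(a,b). (a,b) \<in> Rv E p \<and> a \<noteq> v \<and> b \<noteq> v}\<^sup>*"
      using first_hit[OF h uv(1)] by auto
    have "(u,w) \<in> (Rv E v)\<^sup>*" using subsetD[OF rtrancl_mono[OF Rv_sub_G] w(2)] .
    moreover have "(p,u) \<in> (Rv E v)\<^sup>*" using Rv_sym[OF sym p(2)] .
    ultimately have "(p,w) \<in> (Rv E v)\<^sup>*" using rtrancl_trans by metis
    moreover have "E v w" "w \<noteq> p" using w(1) sym unfolding Rv_def by auto
    moreover have "E v p" using p sym by auto
    ultimately show False using treeU[OF T, of v p w] by auto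
  qed
  then show ?thesis using pu pv by auto
qed

lemma T4:
  assumes "\<forall>w. E l w \<longrightarrow> w = b" "y \<noteq> l"
  shows "(l,y) \<notin> (Rv E b)\<^sup>*"
proof
  assume "(l,y) \<in> (Rv E b)\<^sup>*"
  then show False using assms
    by (cases rule: converse_rtranclE) (auto simp: Rv_def)
qed

lemma Rv_self: "(x,p) \<in> (Rv E p)\<^sup>* \<Longrightarrow> x = p"
  by (cases rule: rtranclE) (auto simp: Rv_def)

lemma Rv_mono:
  assumes "(x,k) \<notin> (Rv E p)\<^sup>*" "(x,u) \<in> (Rv E p)\<^sup>*"
  shows "(x,u) \<in> (Rv E k)\<^sup>*"
  using assms(2,1)
proof (induction rule: rtrancl_induct)
  case base
  then show ?case by simp
next
  case (step w u)
  have "w \<noteq> k" using step by auto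
  moreover have "u \<noteq> k" using step(1,2,4) rtrancl.rtrancl_into_rtrancl by metis
  ultimately have "(w,u) \<in> Rv E k" using step(2) unfolding Rv_def by auto
  then show ?case using step by auto
qed

lemma measure_less:
  fixes x k p :: "'n::finite"
  assumes "(x,k) \<notin> (Rv E p)\<^sup>*" "(x,p) \<in> (Rv E k)\<^sup>*" "x \<noteq> p"
  shows "card {u. (x,u) \<in> (Rv E p)\<^sup>*} < card {u. (x,u) \<in> (Rv E k)\<^sup>*}"
proof (rule psubset_card_mono)
  show "finite {u. (x,u) \<in> (Rv E k)\<^sup>*}" by simp
  show "{u. (x,u) \<in> (Rv E p)\<^sup>*} \<subset> {u. (x,u) \<in> (Rv E k)\<^sup>*}"
    using Rv_mono[OF assms(1)] assms(2,3) Rv_self[of x p E] by auto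
qed


lemma quad_sum: "x \<bullet> (A *v x) = (\<Sum>u\<in>UNIV. x$u * (\<Sum>w\<in>UNIV. A$u$w * x$w))"
  by (simp add: inner_vec_def matrix_vector_mult_def)

lemma pd_ker: assumes "pos_def S" "S *v x = 0" shows "x = 0"
proof (rule ccontr)
  assume "x \<noteq> 0"
  then have "x \<bullet> (S *v x) > 0" using assms(1) unfolding pos_def_def by auto
  then show False using assms(2) by simp
qed

lemma pd_inv:
  fixes S :: "real^'n^'n"
  assumes "pos_def S"
  shows "S ** matrix_inv S = mat 1 \<and> matrix_inv S ** S = mat 1"
proof -
  have "\<exists>B. B ** S = mat 1" using matrix_left_invertible_ker[of S] pd_ker[OF assms] by blast
  then have "invertible S" using invertible_left_inverse by blast
  then have "\<exists>A'. S ** A' = mat 1 \<and> A' ** S = mat 1" unfolding invertible_def .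
  then show ?thesis unfolding matrix_inv_def by (rule someI_ex)
qed

lemma inv_entry:
  fixes S :: "real^'n^'n"
  assumes "pos_def S"
  shows "(\<Sum>w\<in>UNIV. matrix_inv S $ u $ w * S $ w $ i) = (if u = i then 1 else 0)"
proof -
  have "(matrix_inv S ** S) $ u $ i = mat 1 $ u $ i" using pd_inv[OF assms] by simp
  then show ?thesis by (simp add: matrix_matrix_mult_def mat_def)
qed

lemma inv_pos:
  fixes S :: "real^'n^'n"
  assumes "pos_def S" "x \<noteq> 0"
  shows "x \<bullet> (matrix_inv S *v x) > 0"
proof -
  define y where "y = matrix_inv S *v x"
  have Sy: "S *v y = x" unfolding y_def matrix_vector_mul_assoc using pd_inv[OF assms(1)] by simp
  have "y \<noteq> 0" using Sy assms(2) by auto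
  then have "y \<bullet> (S *v y) > 0" using assms(1) unfolding pos_def_def by auto
  then show ?thesis using Sy unfolding y_def by (simp add: inner_commute)
qed

lemma restrict_zero:
  fixes S :: "real^'n^'n" and z :: "'n \<Rightarrow> real"
  assumes "pos_def S"
    and h: "\<forall>u\<in>C. z u * (\<Sum>w\<in>C. matrix_inv S $ u $ w * z w) = 0"
  shows "\<forall>u\<in>C. z u = 0"
proof -
  define x :: "real^'n" where "x = (\<chi> u. if u \<in> C then z u else 0)"
  have "x \<bullet> (matrix_inv S *v x) = (\<Sum>u\<in>UNIV. x$u * (\<Sum>w\<in>UNIV. matrix_inv S$u$w * x$w))"
    by (rule quad_sum)
  also have "\<dots> = (\<Sum>u\<in>UNIV. if u \<in> C then z u * (\<Sum>w\<in>C. matrix_inv S $ u $ w * z w) else 0)"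
  proof (rule sum.cong[OF refl])
    fix u
    have "(\<Sum>w\<in>UNIV. matrix_inv S$u$w * x$w) = (\<Sum>w\<in>UNIV. if w \<in> C then matrix_inv S$u$w * z w else 0)"
      unfolding x_def by (intro sum.cong) auto
    also have "\<dots> = (\<Sum>w\<in>C. matrix_inv S$u$w * z w)"
      by (simp add: sum.If_cases)
    finally show "x$u * (\<Sum>w\<in>UNIV. matrix_inv S$u$w * x$w) = (if u \<in> C then z u * (\<Sum>w\<in>C. matrix_inv S $ u $ w * z w) else 0)"
      unfolding x_def by simp
  qed
  also have "\<dots> = 0" using h by (intro sum.neutral) auto
  finally have "x = 0" using inv_pos[OF assms(1)] by fastforce
  then show ?thesis unfolding x_def by (metis (mono_tags, lifting) vec_lambda_beta zero_index)
qed

lemma Rv_ne: "(a,u) \<in> (Rv E k)\<^sup>* \<Longrightarrow> a \<noteq> k \<Longrightarrow> u \<noteq> k"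
  by (cases rule: rtranclE) (auto simp: Rv_def)

lemma split_sum:
  fixes S :: "real^'n^'n" and z :: "'n \<Rightarrow> real" and a k u :: 'n
  defines "C \<equiv> {u. (a,u) \<in> (Rv (ci_graph S) k)\<^sup>*}"
  assumes "a \<noteq> k" "u \<in> C"
  shows "(\<Sum>w\<in>UNIV. matrix_inv S $ u $ w * z w) = (\<Sum>w\<in>C. matrix_inv S $ u $ w * z w) + matrix_inv S $ u $ k * z k"
proof -
  have kC: "k \<notin> C" using Rv_ne[of a k _ k] assms unfolding C_def by auto
  have uk: "u \<noteq> k" using Rv_ne[of a u _ k] assms unfolding C_def by auto
  have "(\<Sum>w\<in>UNIV. matrix_inv S $ u $ w * z w) = (\<Sum>w\<in>C. matrix_inv S $ u $ w * z w) + (\<Sum>w\<in>UNIV - C. matrix_inv S $ u $ w * z w)"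
    by (metis (no_types, lifting) add.commute finite sum.subset_diff top_greatest)
  also have "(\<Sum>w\<in>UNIV - C. matrix_inv S $ u $ w * z w) = (\<Sum>w\<in>{k}. matrix_inv S $ u $ w * z w)"
  proof (rule sum.mono_neutral_right)
    show "finite (UNIV - C)" by simp
    show "{k} \<subseteq> UNIV - C" using kC by auto
    show "\<forall>i\<in>UNIV - C - {k}. matrix_inv S $ u $ i * z i = 0"
    proof
      fix w assume w: "w \<in> UNIV - C - {k}"
      show "matrix_inv S $ u $ w * z w = 0"
      proof (rule ccontr)
        assume "matrix_inv S $ u $ w * z w \<noteq> 0"
        then have "matrix_inv S $ u $ w \<noteq> 0" by auto
        moreover have "u \<noteq> w" using w assms(3) by auto
        ultimately have "ci_graph S u w" unfolding ci_graph_def by auto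
        then have "(u,w) \<in> Rv (ci_graph S) k" using uk w unfolding Rv_def by auto
        then have "w \<in> C" using assms(3) unfolding C_def by (simp add: rtrancl_into_rtrancl)
        then show False using w by auto
      qed
    qed
  qed
  finally show ?thesis by simp
qed


lemma pd_sym: "pos_def S \<Longrightarrow> S $ i $ j = S $ j $ i"
  unfolding pos_def_def by (metis transpose_def vec_lambda_beta)

lemma pd_diag: fixes S :: "real^'n^'n" assumes "pos_def S" shows "S $ i $ i > 0"
proof -
  have "axis i 1 \<noteq> (0::real^'n)" by (simp add: axis_eq_0_iff)
  then have "axis i 1 \<bullet> (S *v axis i 1) > 0" using assms unfolding pos_def_def by auto
  then show ?thesis by (simp add: matrix_vector_mult_basis inner_axis' column_def)
qed

lemma quad2:
  fixes A :: "real^'n^'n"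
  assumes "i \<noteq> j"
  shows "(c *\<^sub>R axis i 1 + d *\<^sub>R axis j 1) \<bullet> (A *v (c *\<^sub>R axis i 1 + d *\<^sub>R axis j 1))
     = c*c*A$i$i + c*d*A$i$j + d*c*A$j$i + d*d*A$j$j"
proof -
  have e: "\<And>a b. axis a 1 \<bullet> (A *v axis b 1) = A$a$b"
    by (simp add: matrix_vector_mult_basis inner_axis' column_def)
  have "A *v (c *\<^sub>R axis i 1 + d *\<^sub>R axis j 1) = c *\<^sub>R (A *v axis i 1) + d *\<^sub>R (A *v axis j 1)"
    by (simp add: matrix_vector_right_distrib matrix_vector_mult_scaleR)
  then have "(c *\<^sub>R axis i 1 + d *\<^sub>R axis j 1) \<bullet> (A *v (c *\<^sub>R axis i 1 + d *\<^sub>R axis j 1))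
     = c*c*(axis i 1 \<bullet> (A *v axis i 1)) + c*d*(axis i 1 \<bullet> (A *v axis j 1))
       + d*c*(axis j 1 \<bullet> (A *v axis i 1)) + d*d*(axis j 1 \<bullet> (A *v axis j 1))"
    by (simp only: inner_add_left inner_add_right inner_scaleR_left inner_scaleR_right) (simp add: algebra_simps)
  then show ?thesis by (simp only: e)
qed

lemma norm2: fixes i j :: "'n::finite" assumes "i \<noteq> j"
  shows "(c *\<^sub>R axis i 1 + d *\<^sub>R axis j 1) \<bullet> (c *\<^sub>R axis i 1 + d *\<^sub>R axis j 1 :: real^'n) = c*c + d*d"
  using assms by (simp add: inner_add_left inner_add_right inner_axis_axis)

lemma vec2_nz: fixes i j :: "'n::finite" assumes "i \<noteq> j" "c \<noteq> 0"
  shows "(c *\<^sub>R axis i 1 + d *\<^sub>R axis j 1 :: real^'n) \<noteq> 0"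
proof
  assume "c *\<^sub>R axis i 1 + d *\<^sub>R axis j 1 = (0::real^'n)"
  then have "(c *\<^sub>R axis i 1 + d *\<^sub>R axis j 1 :: real^'n) $ i = 0" by simp
  then show False using assms by (simp add: axis_def)
qed

lemma pd2:
  fixes S :: "real^'n^'n"
  assumes "pos_def S" "i \<noteq> j"
  shows "(S$i$j)^2 < S$i$i * S$j$j"
proof -
  have ai: "S$i$i > 0" using pd_diag[OF assms(1)] .
  let ?x = "(S$i$j) *\<^sub>R axis i 1 + (- S$i$i) *\<^sub>R axis j 1 :: real^'n"
  have "?x \<noteq> 0" using vec2_nz[OF assms(2)[symmetric], of "- S$i$i" "S$i$j"] ai
    by (simp add: add.commute)
  then have "?x \<bullet> (S *v ?x) > 0" using assms(1) unfolding pos_def_def by auto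
  then have "S$i$i * (S$i$i * S$j$j - (S$i$j)^2) > 0"
    unfolding quad2[OF assms(2)] pd_sym[OF assms(1), of j i] by (simp add: power2_eq_square algebra_simps)
  then show ?thesis using ai by (simp add: zero_less_mult_iff)
qed

lemma markov:
  fixes S :: "real^'n^'n"
  assumes pd: "pos_def S" and ik: "i \<noteq> k" and jk: "j \<noteq> k"
    and sep: "(j,i) \<notin> (Rv (ci_graph S) k)\<^sup>*"
  shows "S$k$k * S$j$i = S$k$i * S$j$k"
proof -
  define C where "C = {u. (j,u) \<in> (Rv (ci_graph S) k)\<^sup>*}"
  define z where "z = (\<lambda>w. S$k$k * S$w$i - S$k$i * S$w$k)"
  have "\<forall>u\<in>C. z u * (\<Sum>w\<in>C. matrix_inv S $ u $ w * z w) = 0"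
  proof
    fix u assume u: "u \<in> C"
    have ui: "u \<noteq> i" using u sep unfolding C_def by auto
    have uk: "u \<noteq> k" using u Rv_ne[of j u _ k] jk unfolding C_def by auto
    have "(\<Sum>w\<in>UNIV. matrix_inv S $ u $ w * z w)
        = S$k$k * (\<Sum>w\<in>UNIV. matrix_inv S $ u $ w * S$w$i) - S$k$i * (\<Sum>w\<in>UNIV. matrix_inv S $ u $ w * S$w$k)"
      unfolding z_def by (simp add: sum_subtractf sum_distrib_left algebra_simps)
    also have "\<dots> = 0" using ui uk by (simp add: inv_entry[OF pd])
    finally have "(\<Sum>w\<in>UNIV. matrix_inv S $ u $ w * z w) = 0" .
    moreover have "z k = 0" unfolding z_def by simp
    ultimately have "(\<Sum>w\<in>C. matrix_inv S $ u $ w * z w) = 0"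
      using split_sum[OF jk, of u S z] u unfolding C_def by simp
    then show "z u * (\<Sum>w\<in>C. matrix_inv S $ u $ w * z w) = 0" by simp
  qed
  then have "\<forall>u\<in>C. z u = 0" by (rule restrict_zero[OF pd])
  moreover have "j \<in> C" unfolding C_def by simp
  ultimately have "z j = 0" by auto
  then show ?thesis unfolding z_def by simp
qed

lemma edge_nz:
  fixes S :: "real^'n^'n"
  assumes pd: "pos_def S" and T: "is_tree (ci_graph S)" and e: "ci_graph S i j"
  shows "S$i$j \<noteq> 0"
proof
  assume z0: "S$i$j = 0"
  have ij: "i \<noteq> j" using e unfolding ci_graph_def by auto
  have sym: "\<And>u v. ci_graph S u v \<Longrightarrow> ci_graph S v u" using T unfolding is_tree_def by auto
  define C where "C = {u. (i,u) \<in> (Rv (ci_graph S) j)\<^sup>*}"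
  define z where "z = (\<lambda>w. S$w$j)"
  have "\<forall>u\<in>C. z u * (\<Sum>w\<in>C. matrix_inv S $ u $ w * z w) = 0"
  proof
    fix u assume u: "u \<in> C"
    have uj: "u \<noteq> j" using u Rv_ne[of i u _ j] ij unfolding C_def by auto
    have "(\<Sum>w\<in>UNIV. matrix_inv S $ u $ w * z w) = 0"
      unfolding z_def using uj by (simp add: inv_entry[OF pd])
    then have s: "(\<Sum>w\<in>C. matrix_inv S $ u $ w * z w) = - matrix_inv S $ u $ j * z j"
      using split_sum[OF ij, of u S z] u unfolding C_def by simp
    show "z u * (\<Sum>w\<in>C. matrix_inv S $ u $ w * z w) = 0"
    proof (cases "u = i")
      case True
      then show ?thesis using z0 unfolding z_def by simp
    next
      case False
      have "matrix_inv S $ u $ j = 0"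
      proof (rule ccontr)
        assume "matrix_inv S $ u $ j \<noteq> 0"
        then have "ci_graph S u j" using uj unfolding ci_graph_def by simp
        then have "ci_graph S j u" by (rule sym)
        moreover have "ci_graph S j i" using sym[OF e] .
        moreover have "(i,u) \<in> (Rv (ci_graph S) j)\<^sup>*" using u unfolding C_def by simp
        ultimately show False using treeU[OF T, of j i u] False by auto
      qed
      then show ?thesis using s by simp
    qed
  qed
  then have zc: "\<forall>u\<in>C. z u = 0" by (rule restrict_zero[OF pd])
  have iC: "i \<in> C" unfolding C_def by simp
  have "(\<Sum>w\<in>UNIV. matrix_inv S $ i $ w * z w) = 0"
    unfolding z_def using ij by (simp add: inv_entry[OF pd])
  moreover have "(\<Sum>w\<in>C. matrix_inv S $ i $ w * z w) = 0" using zc by simp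
  ultimately have "matrix_inv S $ i $ j * z j = 0"
    using split_sum[OF ij, of i S z] iC unfolding C_def by simp
  moreover have "matrix_inv S $ i $ j \<noteq> 0" using e unfolding ci_graph_def by simp
  moreover have "z j \<noteq> 0" unfolding z_def using pd_diag[OF pd, of j] by simp
  ultimately show False by simp
qed


lemma pd_symq: fixes A :: "real^'n^'n" assumes "pos_def A"
  shows "x \<bullet> (A *v y) = y \<bullet> (A *v x)"
proof -
  have "x \<bullet> (A *v y) = (x v* A) \<bullet> y" by (simp add: dot_lmul_matrix)
  also have "x v* A = transpose A *v x" by simp
  also have "transpose A = A" using assms unfolding pos_def_def by simp
  finally show ?thesis by (simp add: inner_commute)
qed

lemma quad_scale: fixes A :: "real^'n^'n" shows "(c *\<^sub>R v) \<bullet> (A *v (c *\<^sub>R v)) = c*c*(v \<bullet> (A *v v))"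
  by (simp add: matrix_vector_mult_scaleR)

lemma nonneg_quad_zero:
  fixes G D :: real
  assumes "G \<ge> 0" "\<forall>t. 0 \<le> 2*t*G + t*t*D"
  shows "G = 0"
proof (rule ccontr)
  assume "G \<noteq> 0"
  then have G: "G > 0" using assms(1) by simp
  define q where "q = \<bar>D\<bar> + 1"
  have q: "q > 0" "\<bar>D\<bar> \<le> q" unfolding q_def by auto
  define t where "t = - G / q"
  have "0 \<le> 2*t*G + t*t*D" using assms(2) by simp
  also have "t*t*D \<le> t*t*q" using q(2) by (intro mult_left_mono) auto
  also have "2*t*G + t*t*q = - G*G/q" unfolding t_def using q(1) by (simp add: field_simps power2_eq_square)
  finally have "0 \<le> - G*G/q" by simp
  moreover have "G*G/q > 0" using G q(1) by simp
  ultimately show False by simp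
qed

lemma rayleigh:
  fixes A :: "real^'n^'n"
  assumes pd: "pos_def A" and me: "min_eig_ge A l"
  shows "l * (x \<bullet> x) \<le> x \<bullet> (A *v x)"
proof -
  define f where "f = (\<lambda>v::real^'n. v \<bullet> (A *v v))"
  have cont: "continuous_on (sphere 0 1) f" unfolding f_def
    by (intro continuous_intros matrix_vector_mult_linear_continuous_on)
  have ne: "sphere (0::real^'n) 1 \<noteq> {}"
  proof -
    have "axis undefined 1 \<in> sphere (0::real^'n) 1" by (simp add: norm_axis_1)
    then show ?thesis by auto
  qed
  obtain x0 where x0: "x0 \<in> sphere 0 1" "\<forall>y\<in>sphere 0 1. f x0 \<le> f y"
    using continuous_attains_inf[OF compact_sphere ne cont] by blast
  define \<mu> where "\<mu> = f x0"
  have x0n: "x0 \<bullet> x0 = 1" using x0(1) by (simp add: power2_norm_eq_inner[symmetric])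
  have low: "\<mu> * (v \<bullet> v) \<le> f v" for v
  proof (cases "v = 0")
    case True
    then show ?thesis unfolding f_def by simp
  next
    case False
    define c where "c = 1 / norm v"
    have nv: "norm v > 0" using False by simp
    have "c *\<^sub>R v \<in> sphere 0 1" unfolding c_def using nv by simp
    then have "\<mu> \<le> f (c *\<^sub>R v)" using x0(2) unfolding \<mu>_def by blast
    also have "f (c *\<^sub>R v) = c*c*f v" unfolding f_def by (rule quad_scale)
    finally have "\<mu> \<le> c*c*f v" .
    then have "\<mu> * (norm v)^2 \<le> c*c*(norm v)^2 * f v" using nv
      by (metis mult.commute mult_right_mono zero_le_power2 mult.assoc)
    also have "c*c*(norm v)^2 = 1" unfolding c_def using nv by (simp add: field_simps power2_eq_square)
    finally show ?thesis by (simp add: power2_norm_eq_inner)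
  qed
  define g where "g = A *v x0 - \<mu> *\<^sub>R x0"
  have "\<forall>t. 0 \<le> 2*t*(g \<bullet> g) + t*t*(f g - \<mu> * (g \<bullet> g))"
  proof
    fix t :: real
    let ?v = "x0 + t *\<^sub>R g"
    define a where "a = g \<bullet> x0"
    define G where "G = g \<bullet> g"
    define F where "F = f g"
    have "\<mu> * (?v \<bullet> ?v) \<le> f ?v" by (rule low)
    moreover have "?v \<bullet> ?v = 1 + 2*t*a + t*t*G"
      using x0n unfolding a_def G_def by (simp add: inner_add_left inner_add_right inner_commute algebra_simps)
    moreover have "f ?v = \<mu> + 2*t*(g \<bullet> (A *v x0)) + t*t*F"
    proof -
      have "f ?v = f x0 + t * (x0 \<bullet> (A *v g)) + t * (g \<bullet> (A *v x0)) + t*t*f g"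
        unfolding f_def by (simp add: matrix_vector_right_distrib matrix_vector_mult_scaleR
            inner_add_left inner_add_right algebra_simps)
      then show ?thesis unfolding \<mu>_def F_def using pd_symq[OF pd, of x0 g] by simp
    qed
    moreover have "g \<bullet> (A *v x0) = G + \<mu> * a"
      unfolding g_def a_def G_def by (simp add: inner_diff_right inner_diff_left algebra_simps)
    ultimately have ineq: "\<mu> * (1 + 2*t*a + t*t*G) \<le> \<mu> + 2*t*(G + \<mu> * a) + t*t*F" by simp
    have e1: "\<mu> * (1 + 2*t*a + t*t*G) = \<mu> + 2*t*\<mu>*a + t*t*\<mu>*G" by (simp add: algebra_simps)
    have e2: "2*t*(G + \<mu> * a) = 2*t*G + 2*t*\<mu>*a" by (simp add: algebra_simps)
    have e3: "t*t*(F - \<mu> * G) = t*t*F - t*t*\<mu>*G" by (simp add: algebra_simps)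
    show "0 \<le> 2*t*(g \<bullet> g) + t*t*(f g - \<mu> * (g \<bullet> g))"
      using ineq unfolding G_def[symmetric] F_def[symmetric] e3 e1 e2 by linarith
  qed
  then have "g \<bullet> g = 0" by (intro nonneg_quad_zero) auto
  then have "A *v x0 = \<mu> *\<^sub>R x0" unfolding g_def by simp
  moreover have "x0 \<noteq> 0" using x0n by auto
  ultimately have "is_eigenvalue A \<mu>" unfolding is_eigenvalue_def by blast
  then have "l \<le> \<mu>" using me unfolding min_eig_ge_def by blast
  then have "l * (x \<bullet> x) \<le> \<mu> * (x \<bullet> x)" by (intro mult_right_mono) auto
  also have "\<dots> \<le> f x" by (rule low)
  finally show ?thesis unfolding f_def .
qed


lemma nz_all:
  fixes S :: "real^'n^'n"
  assumes pd: "pos_def S" and T: "is_tree (ci_graph S)" and ij: "i \<noteq> j"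
  shows "S$i$j \<noteq> 0"
  using ij
proof (induction "card {u. (i,u) \<in> (Rv (ci_graph S) j)\<^sup>*}" arbitrary: i j rule: less_induct)
  case less
  have sym: "\<forall>u v. ci_graph S u v \<longrightarrow> ci_graph S v u" using T unfolding is_tree_def by auto
  obtain p where p: "ci_graph S p j" "(i,p) \<in> (Rv (ci_graph S) j)\<^sup>*"
    using first_hit_E[OF T less.prems] by blast
  show ?case
  proof (cases "p = i")
    case True
    then show ?thesis using edge_nz[OF pd T] p(1) by simp
  next
    case False
    have pj: "p \<noteq> j" using p(1) unfolding ci_graph_def by simp
    have jp: "ci_graph S j p" using p(1) sym by blast
    have "(j,i) \<notin> (Rv (ci_graph S) p)\<^sup>* \<or> (p,i) \<notin> (Rv (ci_graph S) j)\<^sup>*"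
      using T2[OF T jp, of i] less.prems False by auto
    moreover have "(p,i) \<in> (Rv (ci_graph S) j)\<^sup>*" using Rv_sym[OF sym p(2)] .
    ultimately have sep: "(j,i) \<notin> (Rv (ci_graph S) p)\<^sup>*" by blast
    then have sep': "(i,j) \<notin> (Rv (ci_graph S) p)\<^sup>*" using Rv_sym[OF sym] by blast
    have ip: "i \<noteq> p" "j \<noteq> p" using False pj by auto
    have m: "S$p$p * S$j$i = S$p$i * S$j$p"
      using markov[OF pd ip sep] .
    have "card {u. (i,u) \<in> (Rv (ci_graph S) p)\<^sup>*} < card {u. (i,u) \<in> (Rv (ci_graph S) j)\<^sup>*}"
      using measure_less[OF sep' p(2)] False by auto
    then have "S$i$p \<noteq> 0" using less.hyps[of i p] False by auto
    then have "S$p$i \<noteq> 0" using pd_sym[OF pd] by metis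
    moreover have "S$j$p \<noteq> 0" using edge_nz[OF pd T jp] .
    moreover have "S$p$p > 0" using pd_diag[OF pd] .
    ultimately have "S$j$i \<noteq> 0" using m by auto
    then show ?thesis using pd_sym[OF pd] by metis
  qed
qed


lemma H:
  fixes S :: "real^'n^'n"
  assumes pd: "pos_def S" and T: "is_tree (ci_graph S)"
    and xy: "x \<noteq> y" and xk: "x \<noteq> k" and yk: "y \<noteq> k"
  shows "S$x$k * S$k$y / S$x$y \<le> S$k$k"
  using xk yk
proof (induction "card {u. (x,u) \<in> (Rv (ci_graph S) k)\<^sup>*}" arbitrary: k rule: less_induct)
  case less
  let ?E = "ci_graph S"
  have sym: "\<forall>u v. ?E u v \<longrightarrow> ?E v u" using T unfolding is_tree_def by auto
  have sy: "\<And>a b. S$a$b = S$b$a" using pd_sym[OF pd] by metis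
  have nz: "\<And>a b. a \<noteq> b \<Longrightarrow> S$a$b \<noteq> 0" using nz_all[OF pd T] by blast
  have dg: "\<And>a. S$a$a > 0" using pd_diag[OF pd] by blast
  have p2: "\<And>a b. a \<noteq> b \<Longrightarrow> (S$a$b)^2 < S$a$a * S$b$b" using pd2[OF pd] by blast
  have sxy: "S$x$y \<noteq> 0" using nz xy by blast
  show ?case
  proof (cases "(x,y) \<in> (Rv ?E k)\<^sup>*")
    case False
    have "S$k$k * S$x$y = S$k$y * S$x$k" using markov[OF pd less.prems(2) less.prems(1) False] .
    then have "S$x$k * S$k$y = S$k$k * S$x$y" by (simp add: mult.commute)
    then have "S$x$k * S$k$y / S$x$y = S$k$k" using sxy by simp
    then show ?thesis by simp
  next
    case True
    obtain p where p: "?E p k" "(x,p) \<in> (Rv ?E k)\<^sup>*" using first_hit_E[OF T less.prems(1)] by blast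
    have pk: "p \<noteq> k" using p(1) unfolding ci_graph_def by simp
    have kp: "?E k p" using p(1) sym by blast
    have py: "(p,y) \<in> (Rv ?E k)\<^sup>*" using Rv_sym[OF sym p(2)] True by simp
    have sepy: "(k,y) \<notin> (Rv ?E p)\<^sup>*" if "y \<noteq> p"
      using T2[OF T kp, of y] that less.prems py by auto
    have sepx: "(k,x) \<notin> (Rv ?E p)\<^sup>*" if "x \<noteq> p"
      using T2[OF T kp, of x] that less.prems Rv_sym[OF sym p(2)] by auto
    show ?thesis
    proof (cases "p = x")
      case True
      have "S$x$x * S$k$y = S$x$y * S$k$x"
        using markov[OF pd _ _ sepy] True xy less.prems by auto
      then have eq: "S$k$y = S$x$y * S$k$x / S$x$x" using dg[of x] by (simp add: field_simps)
      have "S$x$k * S$k$y / S$x$y = (S$x$k)^2 / S$x$x"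
        unfolding eq using sxy sy[of k x] by (simp add: field_simps power2_eq_square)
      also have "\<dots> \<le> S$k$k" using p2[OF less.prems(1)] dg[of x] by (simp add: field_simps)
      finally show ?thesis .
    next
      case px: False
      show ?thesis
      proof (cases "p = y")
        case True
        have "S$y$y * S$k$x = S$y$x * S$k$y"
          using markov[OF pd _ _ sepx[OF not_sym[OF px]]] True xy less.prems by auto
        then have eq: "S$x$k = S$y$x * S$k$y / S$y$y" using dg[of y] sy[of x k] by (simp add: field_simps)
        have "S$x$k * S$k$y / S$x$y = (S$k$y)^2 / S$y$y"
          unfolding eq using sxy sy[of y x] by (simp add: field_simps power2_eq_square)
        also have "\<dots> \<le> S$k$k" using p2[OF less.prems(2)] dg[of y] sy[of y k] by (simp add: field_simps)
        finally show ?thesis .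
      next
        case py': False
        have m1: "S$p$p * S$k$x = S$p$x * S$k$p"
          using markov[OF pd _ _ sepx[OF not_sym[OF px]]] px pk by auto
        have m2: "S$p$p * S$k$y = S$p$y * S$k$p"
          using markov[OF pd _ _ sepy[OF not_sym[OF py']]] py' pk by auto
        have sepx': "(x,k) \<notin> (Rv ?E p)\<^sup>*" using sepx[OF not_sym[OF px]] Rv_sym[OF sym] by blast
        have "card {u. (x,u) \<in> (Rv ?E p)\<^sup>*} < card {u. (x,u) \<in> (Rv ?E k)\<^sup>*}"
          using measure_less[OF sepx' p(2)] px by auto
        then have IH: "S$x$p * S$p$y / S$x$y \<le> S$p$p"
          using less.hyps[of p] px py' by auto
        have "S$x$k * S$k$y / S$x$y = (S$k$p)^2 / (S$p$p)^2 * (S$x$p * S$p$y / S$x$y)"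
        proof -
          have e1: "S$x$k = S$p$x * S$k$p / S$p$p" using m1 dg[of p] sy[of x k] by (simp add: field_simps)
          have e2: "S$k$y = S$p$y * S$k$p / S$p$p" using m2 dg[of p] by (simp add: field_simps)
          show ?thesis unfolding e1 e2 using sy[of x p] by (simp add: field_simps power2_eq_square)
        qed
        also have "\<dots> \<le> (S$k$p)^2 / (S$p$p)^2 * S$p$p"
          using IH by (intro mult_left_mono) auto
        also have "\<dots> = (S$k$p)^2 / S$p$p" using dg[of p] by (simp add: power2_eq_square)
        also have "\<dots> \<le> S$k$k" using p2[OF pk[symmetric]] dg[of p] by (simp add: field_simps)
        finally show ?thesis .
      qed
    qed
  qed
qed


lemma leaf_calc:
  fixes A B :: "real^'n^'n"
  assumes pdA: "pos_def A" and TA: "is_tree (ci_graph A)"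
    and pdB: "pos_def B" and TB: "is_tree (ci_graph B)"
    and off: "\<forall>i j. i \<noteq> j \<longrightarrow> B$i$j = A$i$j"
    and lf: "\<forall>w. ci_graph A l w \<longrightarrow> w = b" "ci_graph A l b"
    and sep: "(x,y) \<notin> (Rv (ci_graph B) l)\<^sup>*" "x \<noteq> l" "y \<noteq> l"
  shows "B$l$l * A$b$b = (A$l$b)^2"
proof -
  have sA: "\<And>i j. A$i$j = A$j$i" using pd_sym[OF pdA] by metis
  have sB: "\<And>i j. B$i$j = B$j$i" using pd_sym[OF pdB] by metis
  have symB: "\<forall>u v. ci_graph B u v \<longrightarrow> ci_graph B v u" using TB unfolding is_tree_def by auto
  have nzA: "\<And>i j. i \<noteq> j \<Longrightarrow> A$i$j \<noteq> 0" using nz_all[OF pdA TA] by blast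
  have lb: "l \<noteq> b" using lf(2) unfolding ci_graph_def by simp
  have ab: "A$b$b > 0" using pd_diag[OF pdA] .
  have xy: "x \<noteq> y" using sep(1) by auto
  have mA: "A$b$b * A$l$z = A$b$z * A$l$b" if "z \<noteq> l" "z \<noteq> b" for z
  proof -
    have "(l,z) \<notin> (Rv (ci_graph A) b)\<^sup>*" using T4[of "ci_graph A" l b z] lf(1) that(1) by blast
    from markov[OF pdA that(2) lb this] show ?thesis .
  qed
  obtain x' y' where xy': "x' \<noteq> b" "(x',y') \<notin> (Rv (ci_graph B) l)\<^sup>*" "x' \<noteq> l" "y' \<noteq> l" "x' \<noteq> y'"
  proof (cases "x = b")
    case True
    have "(y,x) \<notin> (Rv (ci_graph B) l)\<^sup>*" using sep(1) Rv_sym[OF symB] by blast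
    then show ?thesis using that[of y x] True xy sep by auto
  next
    case False
    then show ?thesis using that[of x y] xy sep by auto
  qed
  have mB: "B$l$l * B$x'$y' = B$l$y' * B$x'$l" using markov[OF pdB xy'(4) xy'(3) xy'(2)] .
  have ex: "A$l$x' = A$b$x' * A$l$b / A$b$b" using mA[OF xy'(3) xy'(1)] ab by (simp add: field_simps)
  have nbx: "A$b$x' \<noteq> 0" using nzA xy'(1) by metis
  have "B$b$l * B$l$x' / B$b$x' \<le> B$l$l" using H[OF pdB TB, of b x' l] xy'(1,3) lb by metis
  moreover have "B$b$l * B$l$x' / B$b$x' = (A$l$b)^2 / A$b$b"
  proof -
    have "B$b$l * B$l$x' / B$b$x' = A$b$l * A$l$x' / A$b$x'"
      using off lb xy'(1,3) by (metis)
    also have "\<dots> = (A$l$b)^2 / A$b$b" unfolding ex using nbx ab sA[of b l]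
      by (simp add: field_simps power2_eq_square)
    finally show ?thesis .
  qed
  ultimately have low: "(A$l$b)^2 / A$b$b \<le> B$l$l" by simp
  have up: "B$l$l \<le> (A$l$b)^2 / A$b$b"
  proof (cases "y' = b")
    case True
    have "B$l$l * A$x'$b = A$l$b * A$x'$l" using mB True off xy'(1,3) lb by (metis)
    then have "B$l$l = A$l$b * A$x'$l / A$x'$b" using nzA xy'(1) by (simp add: field_simps)
    also have "\<dots> = (A$l$b)^2 / A$b$b" using ex nbx ab sA[of x' l] sA[of x' b]
      by (simp add: field_simps power2_eq_square)
    finally show ?thesis by simp
  next
    case False
    have ey: "A$l$y' = A$b$y' * A$l$b / A$b$b" using mA[OF xy'(4) False] ab by (simp add: field_simps)
    have nxy: "A$x'$y' \<noteq> 0" using nzA xy'(5) by metis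
    have "B$l$l * A$x'$y' = A$l$y' * A$x'$l" using mB off xy' by (metis)
    then have "B$l$l = A$l$y' * A$x'$l / A$x'$y'" using nxy by (simp add: field_simps)
    also have "\<dots> = (A$l$b)^2 / (A$b$b)^2 * (A$x'$b * A$b$y' / A$x'$y')"
      unfolding ey using ex sA[of x' l] sA[of x' b] ab nxy by (simp add: field_simps power2_eq_square)
    also have "\<dots> \<le> (A$l$b)^2 / (A$b$b)^2 * A$b$b"
      using H[OF pdA TA xy'(5) xy'(1) False] by (intro mult_left_mono) auto
    also have "\<dots> = (A$l$b)^2 / A$b$b" using ab by (simp add: power2_eq_square)
    finally show ?thesis .
  qed
  have "B$l$l = (A$l$b)^2 / A$b$b" using low up by simp
  then show ?thesis using ab by (simp add: field_simps)
qed


lemma q_contra: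
  fixes A B :: "real^'n^'n"
  assumes pdB: "pos_def B" and me: "min_eig_ge B lmin"
    and jb: "j \<noteq> b" and q: "B$j$j * A$b$b = (B$j$b)^2" and d: "B$b$b - A$b$b < lmin"
  shows False
proof -
  have sB: "\<And>i j. B$i$j = B$j$i" using pd_sym[OF pdB] by metis
  have bj: "B$j$j > 0" using pd_diag[OF pdB] .
  define c where "c = B$j$b"
  define dd where "dd = - B$j$j"
  define x :: "real^'n" where "x = dd *\<^sub>R axis b 1 + c *\<^sub>R axis j 1"
  have bjn: "b \<noteq> j" using jb by simp
  have dd0: "dd \<noteq> 0" unfolding dd_def using bj by simp
  have xnz: "x \<noteq> 0" unfolding x_def by (rule vec2_nz[OF bjn dd0])
  have qf: "x \<bullet> (B *v x) = (B$j$j)^2 * (B$b$b - A$b$b)"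
  proof -
    have "x \<bullet> (B *v x) = dd*dd*B$b$b + dd*c*B$b$j + c*dd*B$j$b + c*c*B$j$j"
      unfolding x_def by (rule quad2[OF bjn])
    also have "\<dots> = (B$j$j)^2 * B$b$b - B$j$j * (B$j$b)^2"
      unfolding dd_def c_def using sB[of b j] by (simp add: power2_eq_square algebra_simps)
    also have "\<dots> = (B$j$j)^2 * (B$b$b - A$b$b)"
      using q by (simp add: power2_eq_square algebra_simps)
    finally show ?thesis .
  qed
  have "x \<bullet> x = dd*dd + c*c" unfolding x_def by (rule norm2[OF bjn])
  then have nx: "x \<bullet> x = (B$j$j)^2 + c^2" unfolding dd_def by (simp add: power2_eq_square)
  have pos: "x \<bullet> (B *v x) > 0" using pdB xnz unfolding pos_def_def by auto
  then have dpos: "B$b$b - A$b$b > 0" using qf bj by (simp add: zero_less_mult_iff)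
  have ray: "lmin * (x \<bullet> x) \<le> x \<bullet> (B *v x)" using rayleigh[OF pdB me] .
  have "(B$j$j)^2 * (B$b$b - A$b$b) \<le> ((B$j$j)^2 + c^2) * (B$b$b - A$b$b)"
    using dpos by (intro mult_right_mono) auto
  also have "\<dots> < ((B$j$j)^2 + c^2) * lmin"
    using d bj by (intro mult_strict_left_mono) (auto simp: add_pos_nonneg)
  finally show False using ray qf nx by (simp add: algebra_simps)
qed

lemma twonb:
  fixes A B :: "real^'n^'n"
  assumes pdA: "pos_def A" and TA: "is_tree (ci_graph A)"
    and pdB: "pos_def B" and TB: "is_tree (ci_graph B)"
    and off: "\<forall>i j. i \<noteq> j \<longrightarrow> B$i$j = A$i$j"
    and p: "ci_graph A k p" and q: "ci_graph A k q" and pq: "p \<noteq> q"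
  shows "A$k$k \<le> B$k$k"
proof -
  have sA: "\<And>i j. A$i$j = A$j$i" using pd_sym[OF pdA] by metis
  have kp: "k \<noteq> p" "k \<noteq> q" using p q unfolding ci_graph_def by auto
  have sep: "(p,q) \<notin> (Rv (ci_graph A) k)\<^sup>*" using treeU[OF TA p q pq] .
  have m: "A$k$k * A$p$q = A$k$q * A$p$k" using markov[OF pdA kp(2)[symmetric] kp(1)[symmetric] sep] .
  have nz: "A$p$q \<noteq> 0" using nz_all[OF pdA TA pq] .
  have "B$p$k * B$k$q / B$p$q \<le> B$k$k" using H[OF pdB TB pq kp(1)[symmetric] kp(2)[symmetric]] .
  moreover have "B$p$k * B$k$q / B$p$q = A$k$k"
  proof -
    have "B$p$k * B$k$q / B$p$q = A$p$k * A$k$q / A$p$q" using off kp pq by metis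
    also have "\<dots> = A$k$k" using m nz by (simp add: field_simps)
    finally show ?thesis .
  qed
  ultimately show ?thesis by simp
qed

lemma M1:
  fixes A B :: "real^'n^'n"
  assumes pdA: "pos_def A" and TA: "is_tree (ci_graph A)"
    and pdB: "pos_def B" and TB: "is_tree (ci_graph B)"
    and off: "\<forall>i j. i \<noteq> j \<longrightarrow> B$i$j = A$i$j"
    and me: "min_eig_ge B lmin"
    and leafnb: "\<forall>l b. is_leaf (ci_graph A) l \<longrightarrow> ci_graph A l b \<longrightarrow> B$b$b - A$b$b < lmin"
    and sep: "(x,y) \<notin> (Rv (ci_graph B) k)\<^sup>*" "x \<noteq> k" "y \<noteq> k"
  shows "A$k$k \<le> B$k$k"
proof -
  have symA: "\<forall>u v. ci_graph A u v \<longrightarrow> ci_graph A v u" using TA unfolding is_tree_def by auto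
  obtain p where p: "ci_graph A p k" using first_hit_E[OF TA sep(2)] by blast
  have kp: "ci_graph A k p" using p symA by blast
  show ?thesis
  proof (cases "\<exists>q. ci_graph A k q \<and> q \<noteq> p")
    case True
    then obtain q where q: "ci_graph A k q" "p \<noteq> q" by blast
    show ?thesis using twonb[OF pdA TA pdB TB off kp q(1) q(2)] .
  next
    case False
    then have lf: "\<forall>w. ci_graph A k w \<longrightarrow> w = p" by blast
    have "{w. ci_graph A k w} = {p}" using lf kp by blast
    then have leaf: "is_leaf (ci_graph A) k" unfolding is_leaf_def by simp
    have "B$k$k * A$p$p = (A$k$p)^2" using leaf_calc[OF pdA TA pdB TB off lf kp sep] .
    moreover have kpn: "k \<noteq> p" using kp unfolding ci_graph_def by simp
    moreover have "B$k$p = A$k$p" using off kpn by blast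
    ultimately have qq: "B$k$k * A$p$p = (B$k$p)^2" by simp
    have False using q_contra[OF pdB me kpn qq leafnb[rule_format, OF leaf kp]] .
    then show ?thesis ..
  qed
qed


lemma caseA:
  fixes A B :: "real^'n^'n"
  assumes pdA: "pos_def A" and TA: "is_tree (ci_graph A)"
    and pdB: "pos_def B" and TB: "is_tree (ci_graph B)"
    and off: "\<forall>i j. i \<noteq> j \<longrightarrow> B$i$j = A$i$j"
    and me: "min_eig_ge B lmin"
    and leafnb: "\<forall>l b. is_leaf (ci_graph A) l \<longrightarrow> ci_graph A l b \<longrightarrow> B$b$b - A$b$b < lmin"
    and e: "ci_graph A u v" and sepA: "(u,k) \<notin> (Rv (ci_graph A) v)\<^sup>*"
    and sepB: "(u,v) \<notin> (Rv (ci_graph B) k)\<^sup>*" and ku: "k \<noteq> u" and kv: "k \<noteq> v"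
  shows False
proof -
  have uv: "u \<noteq> v" using e unfolding ci_graph_def by simp
  have m1: "A$v$v * A$u$k = A$v$k * A$u$v" using markov[OF pdA kv uv sepA] .
  have m2: "B$k$k * B$u$v = B$k$v * B$u$k" using markov[OF pdB kv[symmetric] ku[symmetric] sepB] .
  have o1: "B$u$v = A$u$v" "B$k$v = A$k$v" "B$u$k = A$u$k" using off uv ku kv by auto
  have nz: "A$u$v \<noteq> 0" using nz_all[OF pdA TA uv] .
  have av: "A$v$v > 0" using pd_diag[OF pdA] .
  have sA: "A$v$k = A$k$v" using pd_sym[OF pdA] by metis
  have "B$k$k * A$u$v = A$k$v * A$u$k" using m2 o1 by simp
  also have "A$u$k = A$v$k * A$u$v / A$v$v" using m1 av by (simp add: field_simps)
  finally have "B$k$k * A$u$v = (A$k$v)^2 / A$v$v * A$u$v" using sA by (simp add: power2_eq_square)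
  then have bk: "B$k$k = (A$k$v)^2 / A$v$v" using nz by (metis mult_right_cancel)
  have "(A$k$v)^2 < A$k$k * A$v$v" using pd2[OF pdA kv] .
  then have "B$k$k < A$k$k" unfolding bk using av by (simp add: field_simps)
  moreover have "A$k$k \<le> B$k$k" using M1[OF pdA TA pdB TB off me leafnb sepB ku[symmetric] kv[symmetric]] .
  ultimately show False by simp
qed

lemma caseB:
  fixes A B :: "real^'n^'n"
  assumes pdA: "pos_def A" and TA: "is_tree (ci_graph A)"
    and pdB: "pos_def B" and TB: "is_tree (ci_graph B)"
    and off: "\<forall>i j. i \<noteq> j \<longrightarrow> B$i$j = A$i$j"
    and me: "min_eig_ge B lmin"
    and leafnb: "\<forall>l b. is_leaf (ci_graph A) l \<longrightarrow> ci_graph A l b \<longrightarrow> B$b$b - A$b$b < lmin"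
    and e: "ci_graph B u v" and sepB: "(u,k) \<notin> (Rv (ci_graph B) v)\<^sup>*"
    and sepA: "(u,v) \<notin> (Rv (ci_graph A) k)\<^sup>*" and ku: "k \<noteq> u" and kv: "k \<noteq> v"
  shows False
proof -
  have off': "\<forall>i j. i \<noteq> j \<longrightarrow> A$i$j = B$i$j" using off by metis
  have symB: "\<forall>u v. ci_graph B u v \<longrightarrow> ci_graph B v u" using TB unfolding is_tree_def by auto
  have uv: "u \<noteq> v" using e unfolding ci_graph_def by simp
  have m1: "B$v$v * B$u$k = B$v$k * B$u$v" using markov[OF pdB kv uv sepB] .
  have m2: "A$k$k * A$u$v = A$k$v * A$u$k" using markov[OF pdA kv[symmetric] ku[symmetric] sepA] .
  have o1: "B$u$v = A$u$v" "B$v$k = A$v$k" "B$u$k = A$u$k" using off uv ku kv by auto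
  have nz: "A$u$k \<noteq> 0" using nz_all[OF pdA TA ku[symmetric]] .
  have sA: "A$v$k = A$k$v" using pd_sym[OF pdA] by metis
  have ak: "A$k$k > 0" using pd_diag[OF pdA] .
  have bv: "B$v$v > 0" using pd_diag[OF pdB] .
  have "B$v$v * A$k$k * A$u$k = A$v$k * A$k$v * A$u$k"
  proof -
    have "B$v$v * A$k$k * A$u$k = (B$v$v * A$u$k) * A$k$k" by (simp add: algebra_simps)
    also have "\<dots> = A$v$k * A$u$v * A$k$k" using m1 o1 by simp
    also have "\<dots> = A$v$k * (A$k$k * A$u$v)" by (simp add: algebra_simps)
    also have "\<dots> = A$v$k * A$k$v * A$u$k" using m2 by simp
    finally show ?thesis .
  qed
  then have q1: "B$v$v * A$k$k = (A$v$k)^2" using nz sA by (simp add: power2_eq_square)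
  have "(B$v$k)^2 < B$v$v * B$k$k" using pd2[OF pdB kv[symmetric]] .
  then have "B$v$v * A$k$k < B$v$v * B$k$k" using q1 o1 by simp
  then have lt: "A$k$k < B$k$k" using bv by simp
  obtain c where c: "ci_graph B c k" using first_hit_E[OF TB ku[symmetric]] by blast
  have kc: "ci_graph B k c" using c symB by blast
  have kcn: "k \<noteq> c" using kc unfolding ci_graph_def by simp
  have lf: "\<forall>w. ci_graph B k w \<longrightarrow> w = c"
  proof (rule ccontr)
    assume "\<not> ?thesis"
    then obtain q where q: "ci_graph B k q" "c \<noteq> q" by blast
    have "B$k$k \<le> A$k$k" using twonb[OF pdB TB pdA TA off' kc q(1) q(2)] .
    then show False using lt by simp
  qed
  have "A$k$k * B$c$c = (B$k$c)^2"
    using leaf_calc[OF pdB TB pdA TA off' lf kc sepA ku[symmetric] kv[symmetric]] .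
  moreover have "B$k$c = A$c$k" using off kcn pd_sym[OF pdA] by metis
  moreover have "(A$c$k)^2 < A$c$c * A$k$k" using pd2[OF pdA kcn[symmetric]] .
  ultimately have "A$k$k * B$c$c < A$k$k * A$c$c" by (simp add: algebra_simps)
  then have lt2: "B$c$c < A$c$c" using ak by simp
  obtain y0 where y0: "y0 \<noteq> c" "y0 \<noteq> k"
    using uv ku kv by (metis)
  have "(k,y0) \<notin> (Rv (ci_graph B) c)\<^sup>*" using T4[of "ci_graph B" k c y0] lf y0(2) by blast
  then have "A$c$c \<le> B$c$c" using M1[OF pdA TA pdB TB off me leafnb] kcn y0(1) by blast
  then show False using lt2 by simp
qed

lemma graphs_eq:
  fixes A B :: "real^'n^'n"
  assumes pdA: "pos_def A" and TA: "is_tree (ci_graph A)"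
    and pdB: "pos_def B" and TB: "is_tree (ci_graph B)"
    and off: "\<forall>i j. i \<noteq> j \<longrightarrow> B$i$j = A$i$j"
    and me: "min_eig_ge B lmin"
    and leafnb: "\<forall>l b. is_leaf (ci_graph A) l \<longrightarrow> ci_graph A l b \<longrightarrow> B$b$b - A$b$b < lmin"
  shows "ci_graph B = ci_graph A"
proof (intro ext iffI)
  have symA: "\<forall>u v. ci_graph A u v \<longrightarrow> ci_graph A v u" using TA unfolding is_tree_def by auto
  have symB: "\<forall>u v. ci_graph B u v \<longrightarrow> ci_graph B v u" using TB unfolding is_tree_def by auto
  fix u v
  {
    assume e: "ci_graph A u v"
    show "ci_graph B u v"
    proof (rule ccontr)
      assume ne: "\<not> ci_graph B u v"
      have uv: "u \<noteq> v" using e unfolding ci_graph_def by simp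
      obtain k where k: "k \<noteq> u" "k \<noteq> v" "(u,v) \<notin> (Rv (ci_graph B) k)\<^sup>*"
        using T1[OF TB uv ne] by blast
      have "(u,k) \<notin> (Rv (ci_graph A) v)\<^sup>* \<or> (v,k) \<notin> (Rv (ci_graph A) u)\<^sup>*"
        using T2[OF TA e k(1) k(2)] .
      then show False
      proof
        assume "(u,k) \<notin> (Rv (ci_graph A) v)\<^sup>*"
        then show False using caseA[OF pdA TA pdB TB off me leafnb e _ k(3) k(1) k(2)] by blast
      next
        assume h: "(v,k) \<notin> (Rv (ci_graph A) u)\<^sup>*"
        have e': "ci_graph A v u" using e symA by blast
        have "(v,u) \<notin> (Rv (ci_graph B) k)\<^sup>*" using k(3) Rv_sym[OF symB] by blast
        then show False using caseA[OF pdA TA pdB TB off me leafnb e' h _ k(2) k(1)] by blast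
      qed
    qed
  }
  {
    assume e: "ci_graph B u v"
    show "ci_graph A u v"
    proof (rule ccontr)
      assume ne: "\<not> ci_graph A u v"
      have uv: "u \<noteq> v" using e unfolding ci_graph_def by simp
      obtain k where k: "k \<noteq> u" "k \<noteq> v" "(u,v) \<notin> (Rv (ci_graph A) k)\<^sup>*"
        using T1[OF TA uv ne] by blast
      have "(u,k) \<notin> (Rv (ci_graph B) v)\<^sup>* \<or> (v,k) \<notin> (Rv (ci_graph B) u)\<^sup>*"
        using T2[OF TB e k(1) k(2)] .
      then show False
      proof
        assume "(u,k) \<notin> (Rv (ci_graph B) v)\<^sup>*"
        then show False using caseB[OF pdA TA pdB TB off me leafnb e _ k(3) k(1) k(2)] by blast
      next
        assume h: "(v,k) \<notin> (Rv (ci_graph B) u)\<^sup>*"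
        have e': "ci_graph B v u" using e symB by blast
        have "(v,u) \<notin> (Rv (ci_graph A) k)\<^sup>*" using k(3) Rv_sym[OF symA] by blast
        then show False using caseB[OF pdA TA pdB TB off me leafnb e' h _ k(2) k(1)] by blast
      qed
    qed
  }
qed

theorem theorem5:
  fixes Sstar Dstar :: "real^'n^'n" and lmin :: real
  assumes "pos_def Sstar"
    and "is_tree (ci_graph Sstar)"
    and "diag_nonneg Dstar"
    and "min_eig_ge Sstar lmin"
    and "\<And>b l. is_leaf (ci_graph Sstar) l \<Longrightarrow> ci_graph Sstar l b \<Longrightarrow> Dstar$b$b < lmin"
  shows "\<forall>S' D' :: real^'n^'n. Sstar + Dstar = S' + D' \<and> pos_def S' \<and> min_eig_ge S' lmin
            \<and> is_tree (ci_graph S') \<and> diag_nonneg D'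
          \<longrightarrow> ci_graph S' = ci_graph Sstar"
proof (intro allI impI)
  fix S' D' :: "real^'n^'n"
  assume h: "Sstar + Dstar = S' + D' \<and> pos_def S' \<and> min_eig_ge S' lmin
            \<and> is_tree (ci_graph S') \<and> diag_nonneg D'"
  then have eq: "Sstar + Dstar = S' + D'" and pdB: "pos_def S'" and me: "min_eig_ge S' lmin"
    and TB: "is_tree (ci_graph S')" and dD: "diag_nonneg D'" by auto
  have ent: "\<And>i j. Sstar$i$j + Dstar$i$j = S'$i$j + D'$i$j"
  proof -
    fix i j
    have "(Sstar + Dstar)$i$j = (S' + D')$i$j" using eq by simp
    then show "Sstar$i$j + Dstar$i$j = S'$i$j + D'$i$j" by simp
  qed
  have off: "\<forall>i j. i \<noteq> j \<longrightarrow> S'$i$j = Sstar$i$j"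
    using ent assms(3) dD unfolding diag_nonneg_def by (metis add.right_neutral)
  have leafnb: "\<forall>l b. is_leaf (ci_graph Sstar) l \<longrightarrow> ci_graph Sstar l b \<longrightarrow> S'$b$b - Sstar$b$b < lmin"
  proof (intro allI impI)
    fix l b assume that: "is_leaf (ci_graph Sstar) l" "ci_graph Sstar l b"
    have "Dstar$b$b < lmin" using assms(5) that by blast
    moreover have "D'$b$b \<ge> 0" using dD unfolding diag_nonneg_def by blast
    moreover have "Sstar$b$b + Dstar$b$b = S'$b$b + D'$b$b" using ent .
    ultimately show "S'$b$b - Sstar$b$b < lmin" by linarith
  qed
  show "ci_graph S' = ci_graph Sstar"
    using graphs_eq[OF assms(1) assms(2) pdB TB off me leafnb] .
qed


end
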